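(* Let $0<\alpha_1,\alpha_2\leq 1$ and $\theta=\frac{\alpha_2-\alpha_1}{\alpha_2+\alpha_1}$. If $f\in\mathcal{S}^*_t(\alpha_1,\alpha_2)$, then $$\mathrm{Re}\left\{\frac{zf'(z)}{f(z)}\right\}\geq\left(\frac{1-(2\cos\frac{\theta}{2}+1)r}{1-r}\right)^{(\alpha_1+\alpha_2)/2}\quad\text{for } 0\leq |z|=r\leq\frac{1}{2\cos\frac{\theta}{2}+1},$$ and $$0<\mathrm{Re}\left\{\frac{zf'(z)}{f(z)}\right\}\leq\left(\frac{1+(2\cos\frac{\theta}{2}-1)r}{1-r}\right)^{(\alpha_1+\alpha_2)/2}\quad\text{for } 0\leq |z|=r<1.$$
   Context: $\Delta=\{z\in\mathbb{C}:|z|<1\}$. $\mathcal{S}^*_t(\alpha_1,\alpha_2)$ denotes the class of functions $f$ analytic in $\Delta$ with $f(0)=0=f'(0)-1$ satisfying $-\frac{\pi\alpha_1}{2}<\arg\left\{\frac{zf'(z)}{f(z)}\right\}<\frac{\pi\alpha_2}{2}$ for all $z\in\Delta$. *)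

theory Defs
  imports "HOL-Analysis.Analysis"
begin

text \<open>The unit disc is ball 0 1. The quotient z f'(z)/f(z), extended to z = 0 by its
  limit value 1 (since f(0)=0, f'(0)=1).\<close>
definition starq :: "(complex \<Rightarrow> complex) \<Rightarrow> complex \<Rightarrow> complex" where
  "starq f z = (if z = 0 then 1 else z * deriv f z / f z)"

text \<open>The class S*_t(alpha1, alpha2): normalized analytic functions on the unit disc
  whose quantity z f'(z)/f(z) has argument strictly between -pi alpha1/2 and pi alpha2/2.
  The argument being defined requires f z \<noteq> 0 for z \<noteq> 0.\<close>
definition St :: "real \<Rightarrow> real \<Rightarrow> (complex \<Rightarrow> complex) set" where
  "St a1 a2 = {f. f holomorphic_on ball 0 1 \<and> f 0 = 0 \<and> deriv f 0 = 1 \<and>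
     (\<forall>z\<in>ball 0 1. z \<noteq> 0 \<longrightarrow> f z \<noteq> 0) \<and>
     (\<forall>z\<in>ball 0 1. - (pi * a1 / 2) < Arg (starq f z) \<and> Arg (starq f z) < pi * a2 / 2)}"

end

theory Submission imports Defs "HOL-Complex_Analysis.Complex_Analysis" begin

lemma cos_powr_le_aux:
  fixes a x :: real
  assumes a: "0 < a" "a \<le> 1" and x: "0 \<le> x" "x < pi/2"
  shows "cos x powr a \<le> cos (a * x)"
proof -
  define h where "h t = ln (cos (a * t)) - a * ln (cos t)" for t
  have cpos: "0 < cos t" if "0 \<le> t" "t \<le> x" for t
    using that x by (intro cos_gt_zero_pi) auto
  have cpos2: "0 < cos (a*t)" if "0 \<le> t" "t \<le> x" for t
  proof -
    have "a * t \<le> t" using that a using mult_right_mono[of a 1 t] by simp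
    moreover have "0 \<le> a * t" using that a by simp
    ultimately show ?thesis using that x pi_gt_zero by (intro cos_gt_zero_pi) linarith+
  qed
  have D: "(h has_real_derivative a * (tan t - tan (a * t))) (at t)" if t: "t \<in> {0..x}" for t
  proof -
    have "(h has_real_derivative (- sin (a*t) * a) / cos (a*t) - a * (- sin t / cos t)) (at t)"
      unfolding h_def using cpos[of t] cpos2[of t] t
      by (auto intro!: derivative_eq_intros)
    moreover have "(- sin (a*t) * a) / cos (a*t) - a * (- sin t / cos t) = a * (tan t - tan (a * t))"
      using cpos[of t] cpos2[of t] t by (simp add: tan_def field_simps)
    ultimately show ?thesis by simp
  qed
  have N: "0 \<le> a * (tan t - tan (a * t))" if t: "t \<in> {0..x}" for t
  proof -
    have "a * t \<le> t" using t a using mult_right_mono[of a 1 t] by simp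
    moreover have "0 \<le> a * t" using t a by simp
    ultimately have "tan (a*t) \<le> tan t" using t a x pi_gt_zero by (intro tan_mono_le) auto
    thus ?thesis using a by simp
  qed
  have "h 0 \<le> h x"
    by (rule deriv_nonneg_imp_mono[of 0 x h "\<lambda>t. a * (tan t - tan (a * t))", OF D N]) (use x in auto)
  hence "a * ln (cos x) \<le> ln (cos (a*x))" by (simp add: h_def)
  thus ?thesis using cpos[of x] cpos2[of x] x
    by (simp add: powr_def) (metis exp_le_cancel_iff exp_ln mult.commute)
qed

lemma cos_powr_le:
  fixes a x :: real
  assumes a: "0 < a" "a \<le> 1" and x: "\<bar>x\<bar> < pi/2"
  shows "cos x powr a \<le> cos (a * x)"
  using cos_powr_le_aux[OF a, of "\<bar>x\<bar>"] x
  by (cases "x \<ge> 0") auto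


lemma disc_map_lt1:
  fixes q u :: complex
  assumes "0 < Re q" "0 < Re u"
  shows "q + u \<noteq> 0" "norm ((q - cnj u) / (q + u)) < 1"
proof -
  have lt: "norm (q - cnj u) < norm (q + u)"
  proof -
    have "(Re q - Re u)^2 + (Im q + Im u)^2 < (Re q + Re u)^2 + (Im q + Im u)^2"
      using assms by (simp add: power2_eq_square algebra_simps)
    thus ?thesis unfolding cmod_def by (simp add: real_sqrt_less_iff)
  qed
  thus "q + u \<noteq> 0" by auto
  thus "norm ((q - cnj u) / (q + u)) < 1" using lt by (simp add: norm_divide divide_less_eq)
qed

lemma nonzero_by_open_mapping:
  fixes p :: "complex \<Rightarrow> complex"
  assumes ph: "p holomorphic_on ball 0 1" and p0: "p 0 = 1"
    and argb: "\<And>z. z \<in> ball 0 1 \<Longrightarrow> Arg (p z) < pi / 2"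
    and z: "z \<in> ball 0 1"
  shows "p z \<noteq> 0"
proof
  assume pz: "p z = 0"
  have nc: "\<not> p constant_on ball 0 1"
  proof
    assume "p constant_on ball 0 1"
    then obtain y where "\<forall>x\<in>ball 0 1. p x = y" unfolding constant_on_def by blast
    hence "p 0 = p z" using z by simp
    thus False using pz p0 by simp
  qed
  have "open (p ` ball 0 1)"
    by (rule open_mapping_thm[OF ph open_ball connected_ball open_ball subset_refl nc])
  moreover have "0 \<in> p ` ball 0 1" by (rule image_eqI[where x=z]) (use pz z in auto)
  ultimately obtain e where e: "e > 0" "ball 0 e \<subseteq> p ` ball 0 1"
    by (rule openE)
  have "complex_of_real (- e/2) \<in> ball 0 e" using e by simp
  hence "complex_of_real (- e/2) \<in> p ` ball 0 1" using e(2) by blast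
  then obtain w where w: "w \<in> ball 0 1" "p w = complex_of_real (- e/2)" by (auto simp del: of_real_minus)
  have "Arg (p w) = pi" using w(2) e(1) by (simp only: Arg_of_real) simp
  thus False using argb[OF w(1)] pi_gt_zero by linarith
qed


theorem theorem2p1:
  fixes a1 a2 :: real and f :: "complex \<Rightarrow> complex"
  assumes "0 < a1" "a1 \<le> 1" "0 < a2" "a2 \<le> 1"
    and "f \<in> St a1 a2"
  defines "\<theta> \<equiv> (a2 - a1) / (a2 + a1)"
  shows "(\<forall>z\<in>ball 0 1. norm z \<le> 1 / (2 * cos (\<theta> / 2) + 1) \<longrightarrow>
            Re (starq f z) \<ge> ((1 - (2 * cos (\<theta> / 2) + 1) * norm z) / (1 - norm z)) powr ((a1 + a2) / 2)) \<and>
         (\<forall>z\<in>ball 0 1. 0 < Re (starq f z) \<and>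
            Re (starq f z) \<le> ((1 + (2 * cos (\<theta> / 2) - 1) * norm z) / (1 - norm z)) powr ((a1 + a2) / 2))"
proof -
  note a = assms(1-4)
  have holf: "f holomorphic_on ball 0 1" and f0: "f 0 = 0" and df0: "deriv f 0 = 1"
    and fnz: "\<And>z. z \<in> ball 0 1 \<Longrightarrow> z \<noteq> 0 \<Longrightarrow> f z \<noteq> 0"
    and argl: "\<And>z. z \<in> ball 0 1 \<Longrightarrow> - (pi * a1 / 2) < Arg (starq f z)"
    and argu: "\<And>z. z \<in> ball 0 1 \<Longrightarrow> Arg (starq f z) < pi * a2 / 2"
    using assms(5) unfolding St_def by auto
  define p where "p = starq f"
  define g where "g z = (if z = 0 then deriv f 0 else (f z - f 0) / (z - 0))" for z
  have gh: "g holomorphic_on ball 0 1"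
    unfolding g_def by (rule pole_lemma_open[OF holf open_ball])
  have gnz: "g z \<noteq> 0" if "z \<in> ball 0 1" for z
    using fnz[OF that] df0 f0 by (auto simp: g_def)
  have peq: "p z = deriv f z / g z" if "z \<in> ball 0 1" for z
    using fnz[OF that] df0 f0 by (auto simp: g_def p_def starq_def)
  have ph: "p holomorphic_on ball 0 1"
  proof -
    have "(\<lambda>z. deriv f z / g z) holomorphic_on ball 0 1"
      by (intro holomorphic_on_divide holomorphic_deriv[OF holf open_ball] gh gnz)
    thus ?thesis by (rule holomorphic_transform) (use peq in auto)
  qed
  have p0: "p 0 = 1" by (simp add: p_def starq_def)
  have argl': "- (pi * a1 / 2) < Arg (p z)" and argu': "Arg (p z) < pi * a2 / 2"
    if "z \<in> ball 0 1" for z using argl[OF that] argu[OF that] by (auto simp: p_def)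
  have pnz: "p z \<noteq> 0" if "z \<in> ball 0 1" for z
  proof (rule nonzero_by_open_mapping[OF ph p0 _ that])
    fix w :: complex assume "w \<in> ball 0 1"
    thus "Arg (p w) < pi / 2" using argu'[of w] a pi_gt_zero
      by (smt (verit) mult_left_le mult_pos_pos divide_right_mono)
  qed
  define L where "L z = Ln (p z)" for z
  have ImL: "Im (L z) = Arg (p z)" if "z \<in> ball 0 1" for z
    using pnz[OF that] by (simp add: L_def Arg_eq_Im_Ln)
  have pexp: "p z = exp (L z)" if "z \<in> ball 0 1" for z
    using pnz[OF that] by (simp add: L_def)
  have argabs: "\<bar>Arg (p z)\<bar> < pi / 2" if "z \<in> ball 0 1" for z
  proof -
    have "pi * a1 / 2 \<le> pi / 2" "pi * a2 / 2 \<le> pi / 2" using a pi_gt_zero by auto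
    thus ?thesis using argl'[OF that] argu'[OF that] by linarith
  qed
  have Rep: "Re (p z) = exp (Re (L z)) * cos (Im (L z))" if "z \<in> ball 0 1" for z
    using pexp[OF that] by (simp add: Re_exp)
  have normp: "norm (p z) = exp (Re (L z))" if "z \<in> ball 0 1" for z
    using pexp[OF that] by simp
  have Repos: "0 < Re (p z)" if "z \<in> ball 0 1" for z
    using Rep[OF that] ImL[OF that] argabs[OF that] by (simp add: cos_gt_zero_pi)
  have Lh: "L holomorphic_on ball 0 1"
    unfolding L_def
    by (rule holomorphic_on_Ln'[OF _ ph]) (use Repos in \<open>force simp: complex_nonpos_Reals_iff\<close>)
  define \<alpha> where "\<alpha> = (a1 + a2) / 2"
  define s where "s = pi * \<theta> / 2"
  define u where "u = exp (\<i> * complex_of_real s)"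
  have apos: "0 < \<alpha>" "\<alpha> \<le> 1" using a by (auto simp: \<alpha>_def)
  have thabs: "\<bar>\<theta>\<bar> < 1" using a by (auto simp: \<theta>_def abs_less_iff divide_less_eq)
  have sabs: "\<bar>s\<bar> < pi/2"
  proof -
    have "\<bar>s\<bar> = pi/2 * \<bar>\<theta>\<bar>" by (simp add: s_def abs_mult)
    also have "\<dots> < pi/2 * 1" using thabs by (intro mult_strict_left_mono) auto
    finally show ?thesis by simp
  qed
  have cspos: "0 < cos s" using sabs by (intro cos_gt_zero_pi) auto
  have Reu: "Re u = cos s" and Imu: "Im u = sin s" by (simp_all add: u_def Re_exp Im_exp)
  have normu: "norm u = 1" by (simp add: u_def)
  have ucnj: "u * cnj u = 1" using normu by (metis complex_norm_square mult.commute of_real_1 power_one)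
  have hi: "\<alpha> * (pi/2 + s) = pi * a2 / 2" and lo: "\<alpha> * (pi/2 - s) = pi * a1 / 2"
    using a by (auto simp: \<alpha>_def s_def \<theta>_def field_simps)
  define Q where "Q z = exp (L z / complex_of_real \<alpha> - \<i> * complex_of_real s)" for z
  have ImQarg: "\<bar>Im (L z) / \<alpha> - s\<bar> < pi/2" if "z \<in> ball 0 1" for z
  proof -
    have "Im (L z) < \<alpha> * (pi/2 + s)" "- (\<alpha> * (pi/2 - s)) < Im (L z)"
      using argl'[OF that] argu'[OF that] ImL[OF that] hi lo by auto
    hence h1: "Im (L z) < (pi/2 + s) * \<alpha>" and h2: "-(pi/2 - s) * \<alpha> < Im (L z)"
      by (simp_all only: mult.commute mult_minus_left)
    have "Im (L z) / \<alpha> < pi/2 + s" by (rule iffD2[OF pos_divide_less_eq[OF apos(1)] h1])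
    moreover have "- (pi/2 - s) < Im (L z) / \<alpha>" by (rule iffD2[OF pos_less_divide_eq[OF apos(1)] h2])
    ultimately show ?thesis by linarith
  qed
  have ReQ: "0 < Re (Q z)" if "z \<in> ball 0 1" for z
  proof -
    have req: "Re (Q z) = exp (Re (L z) / \<alpha>) * cos (Im (L z) / \<alpha> - s)"
      by (simp add: Q_def Re_exp Re_divide_of_real Im_divide_of_real)
    have aq: "-(pi/2) < Im (L z) / \<alpha> - s" "Im (L z) / \<alpha> - s < pi/2"
      using ImQarg[OF that] by (simp_all only: abs_less_iff) linarith+
    have "0 < cos (Im (L z) / \<alpha> - s)" using aq by (intro cos_gt_zero_pi) linarith+
    thus ?thesis using req by simp
  qed
  define \<omega> where "\<omega> z = (Q z - cnj u) / (Q z + u)" for z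
  have Qu: "Q z + u \<noteq> 0" and \<omega>1: "norm (\<omega> z) < 1" if "z \<in> ball 0 1" for z
    using disc_map_lt1[OF ReQ[OF that], of u] cspos Reu by (auto simp: \<omega>_def)
  have \<omega>h: "\<omega> holomorphic_on ball 0 1"
    unfolding \<omega>_def Q_def using Qu[unfolded Q_def]
    by (intro holomorphic_intros Lh) auto
  have L0: "L 0 = 0" by (simp add: L_def p0)
  have \<omega>0: "\<omega> 0 = 0"
  proof -
    have "Q 0 = cnj u" by (simp add: Q_def L0 u_def exp_cnj)
    thus ?thesis by (simp add: \<omega>_def)
  qed
  have schw: "norm (\<omega> z) \<le> norm z" if "z \<in> ball 0 1" for z
    by (rule Schwarz_Lemma(1)[OF \<omega>h \<omega>0]) (use \<omega>1 that in auto)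
  define c where "c = cos (\<theta> / 2)"
  have csc: "cos s \<le> c"
  proof -
    have "cos s = cos \<bar>s\<bar>" "c = cos \<bar>\<theta>/2\<bar>" by (simp_all only: c_def cos_abs_real)
    moreover have "\<bar>\<theta>/2\<bar> \<le> \<bar>s\<bar>"
    proof -
      have "\<bar>\<theta>\<bar> * 1 \<le> \<bar>\<theta>\<bar> * pi" using pi_ge_two by (intro mult_left_mono) auto
      thus ?thesis by (simp add: s_def abs_mult mult.commute)
    qed
    ultimately show ?thesis using sabs cos_monotone_0_pi_le[of "\<bar>\<theta>/2\<bar>" "\<bar>s\<bar>"] by simp
  qed
  have cpos: "0 < c" using csc cspos by linarith
  define P where "P z = exp (L z / complex_of_real \<alpha>)" for z
  have main: "norm (P z - 1) \<le> 2 * c * norm z / (1 - norm z)" if z: "z \<in> ball 0 1" for z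
  proof -
    have PQ: "P z = Q z * u"
      by (simp add: P_def Q_def u_def exp_diff)
    have w: "\<omega> z * (Q z + u) = Q z - cnj u" using Qu[OF z] by (simp add: \<omega>_def)
    have eq: "(P z - 1) * (1 - \<omega> z) = (1 + u^2) * \<omega> z"
    proof -
      have "(Q z * u - 1) * (1 - \<omega> z) - (1 + u^2) * \<omega> z
            = u * (Q z - cnj u - \<omega> z * (Q z + u)) + (u * cnj u - 1)"
        by (simp add: algebra_simps power2_eq_square)
      also have "\<dots> = 0" using w ucnj by simp
      finally show ?thesis unfolding PQ by (simp only: right_minus_eq)
    qed
    have n1: "norm (1 + u^2) = 2 * cos s"
    proof -
      have "u * (u + cnj u) = u^2 + u * cnj u" by (simp add: algebra_simps power2_eq_square)
      hence "1 + u^2 = u * (u + cnj u)" unfolding ucnj by simp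
      also have "u + cnj u = complex_of_real (2 * cos s)" using Reu by (simp add: complex_add_cnj)
      finally show ?thesis using normu cspos by (simp add: norm_mult)
    qed
    define r where "r = norm z"
    have r: "0 \<le> r" "r < 1" using z by (auto simp: r_def)
    have wr: "norm (\<omega> z) \<le> r" using schw[OF z] by (simp add: r_def)
    have "1 - r \<le> norm (1 - \<omega> z)"
      using wr norm_triangle_ineq2[of 1 "\<omega> z"] by (simp add: norm_minus_commute)
    hence "norm (P z - 1) * (1 - r) \<le> norm (P z - 1) * norm (1 - \<omega> z)"
      by (intro mult_left_mono) auto
    also have "\<dots> = 2 * cos s * norm (\<omega> z)"
      using arg_cong[OF eq, of norm] n1 by (simp only: norm_mult)
    also have "\<dots> \<le> 2 * c * r" using wr csc cspos r
      by (intro mult_mono) auto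
    finally show ?thesis using r by (simp add: r_def pos_le_divide_eq)
  qed
  have normP: "norm (P z) = exp (Re (L z) / \<alpha>)" for z by (simp add: P_def Re_divide_of_real)
  have ReP: "Re (P z) = exp (Re (L z) / \<alpha>) * cos (Im (L z) / \<alpha>)" for z
    by (simp add: P_def Re_exp Re_divide_of_real Im_divide_of_real)
  have expa: "exp (Re (L z) / \<alpha>) powr \<alpha> = exp (Re (L z))" for z
    using apos by (simp add: powr_def)
  show ?thesis
  proof (intro conjI ballI impI)
    fix z :: complex assume z: "z \<in> ball 0 1"
    show "0 < Re (starq f z)" using Repos[OF z] by (simp add: p_def)
    define r where "r = norm z"
    have r: "0 \<le> r" "r < 1" using z by (auto simp: r_def)
    have "norm (P z) \<le> 1 + norm (P z - 1)" using norm_triangle_ineq[of 1 "P z - 1"] by simp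
    also have "\<dots> \<le> 1 + 2 * c * r / (1 - r)" using main[OF z] by (simp add: r_def)
    also have "\<dots> = (1 + (2 * c - 1) * r) / (1 - r)" using r by (simp add: field_simps)
    finally have nP: "norm (P z) \<le> (1 + (2 * c - 1) * r) / (1 - r)" .
    have "Re (starq f z) \<le> norm (p z)" by (simp add: p_def complex_Re_le_cmod)
    also have "\<dots> = norm (P z) powr \<alpha>" using normp[OF z] normP expa by simp
    also have "\<dots> \<le> ((1 + (2 * c - 1) * r) / (1 - r)) powr \<alpha>"
      using nP apos by (intro powr_mono2) auto
    finally show "Re (starq f z) \<le> ((1 + (2 * cos (\<theta> / 2) - 1) * norm z) / (1 - norm z)) powr ((a1 + a2) / 2)"
      by (simp add: r_def c_def \<alpha>_def)
  next
    fix z :: complex assume z: "z \<in> ball 0 1"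
      and rle: "norm z \<le> 1 / (2 * cos (\<theta> / 2) + 1)"
    define r where "r = norm z"
    have r: "0 \<le> r" "r < 1" using z by (auto simp: r_def)
    define m where "m = (1 - (2 * c + 1) * r) / (1 - r)"
    have "r * (2 * c + 1) \<le> 1" using rle cpos
      by (simp add: r_def c_def pos_le_divide_eq)
    hence m0: "0 \<le> m" using r unfolding m_def
      by (intro divide_nonneg_nonneg) (auto simp: algebra_simps)
    have mP: "m \<le> Re (P z)"
    proof -
      have "m = 1 - 2 * c * r / (1 - r)" using r by (simp add: m_def field_simps)
      also have "\<dots> \<le> 1 - norm (P z - 1)" using main[OF z] by (simp add: r_def)
      also have "\<dots> \<le> Re (P z)" using abs_Re_le_cmod[of "P z - 1"] by simp
      finally show ?thesis .
    qed
    have goal: "m powr \<alpha> \<le> Re (p z)"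
    proof (cases "m = 0")
      case True thus ?thesis using Repos[OF z] by simp
    next
      case False
      hence mpos: "0 < m" using m0 by simp
      define \<phi> where "\<phi> = Im (L z) / \<alpha>"
      have "0 < exp (Re (L z) / \<alpha>) * cos \<phi>" using mP mpos ReP[of z] by (simp add: \<phi>_def)
      hence cphi: "0 < cos \<phi>" by (simp add: zero_less_mult_iff)
      have "\<bar>\<phi> - s\<bar> < pi/2" using ImQarg[OF z] by (simp only: \<phi>_def)
      hence phipi: "\<bar>\<phi>\<bar> < pi" using sabs abs_triangle_ineq[of "\<phi> - s" s] by simp
      have phi2: "\<bar>\<phi>\<bar> < pi/2"
      proof (rule ccontr)
        assume "\<not> \<bar>\<phi>\<bar> < pi/2"
        hence "cos \<bar>\<phi>\<bar> \<le> cos (pi/2)" using phipi by (intro cos_monotone_0_pi_le) auto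
        thus False using cphi by simp
      qed
      have "m powr \<alpha> \<le> Re (P z) powr \<alpha>" using mP m0 apos by (intro powr_mono2) auto
      also have "\<dots> = exp (Re (L z)) * cos \<phi> powr \<alpha>"
        using ReP[of z] expa[of z] cphi by (simp add: \<phi>_def powr_mult)
      also have "\<dots> \<le> exp (Re (L z)) * cos (\<alpha> * \<phi>)"
        using cos_powr_le[OF apos phi2] by simp
      also have "\<alpha> * \<phi> = Im (L z)" using apos by (simp add: \<phi>_def)
      also have "exp (Re (L z)) * cos (Im (L z)) = Re (p z)" using Rep[OF z] by simp
      finally show ?thesis .
    qed
    thus "((1 - (2 * cos (\<theta> / 2) + 1) * norm z) / (1 - norm z)) powr ((a1 + a2) / 2) \<le> Re (starq f z)"
      by (simp add: m_def r_def c_def \<alpha>_def p_def)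
  qed
qed

end
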